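(* In the construction described in the context, assume Assumption 4.3 and Assumption 4.4 hold. Then for every extended state $(\xi,\vec\theta)\in\Xi\times\{-1,1\}^n$ and every $i\in\mathcal{A}(\xi)$ there exists $m\in\mathbb{N}$ with $$\mathcal{K}^m\big((\xi,\vec\theta),(\xi,R_i(\vec\theta))\big)>0.$$
   Context: Let $\Xi$ be a countable set, $\tilde\pi$ a probability measure on $\Xi$ and $\tilde Q$ a Markov kernel on $\Xi$. Assumption 4.3: (i) $\tilde\pi(\xi)>0$ for all $\xi$; (ii) $\tilde Q(\xi,\xi')\ne0$ iff $\tilde Q(\xi',\xi)\ne0$; (iii) the chain generated by $\tilde Q$ is irreducible. State graph $\mathcal{G}=(\mathcal{V},\mathcal{E})$, $\mathcal{V}=\Xi$, $\mathcal{E}=\{(\xi,\xi'):\tilde Q(\xi,\xi')>0\}$. For $i=1,\dots,n$, $\mathcal{G}_i^+=(\mathcal{V}_i,\mathcal{E}_i^+)$ are directed subgraphs of $\mathcal{G}$ without isolated vertices; $\mathcal{E}_i^-=\{(u,v):(v,u)\in\mathcal{E}_i^+\}$, $\mathcal{E}_i=\mathcal{E}_i^+\cup\mathcal{E}_i^-$, with $\mathcal{V}=\bigcup_i\mathcal{V}_i$, $\mathcal{E}=\bigcup_i\mathcal{E}_i$. $\mathcal{N}_i^{\pm}(\xi)=\{\xi':(\xi,\xi')\in\mathcal{E}_i^{\pm}\}$, and $\mathcal{N}_i^\theta$ is $\mathcal{N}_i^+$ for $\theta=+1$, $\mathcal{N}_i^-$ for $\theta=-1$. Extended space $\mathcal{X}=\Xi\times\{-1,1\}^n$;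 $\mathcal{X}_i=\mathcal{V}_i\times\{-1,1\}^n$; $R_i$ flips the sign of the $i$-th component of $\vec\theta$; $S_i(\xi,\vec\theta)=(\xi,R_i(\vec\theta))$. For $(\xi,\vec\theta)\in\mathcal{X}_i$: $Q_i((\xi,\vec\theta),(\xi',\vec\theta'))=\tilde Q(\xi,\xi')/\tilde Q(\xi,\mathcal{N}_i^{\theta_i}(\xi))$ if $\xi'\in\mathcal{N}_i^{\theta_i}(\xi)$, $\vec\theta'=\vec\theta$; $=1$ if $\mathcal{N}_i^{\theta_i}(\xi)=\emptyset$, $\xi'=\xi$, $\vec\theta'=R_i(\vec\theta)$; $=0$ otherwise. Weights $\tilde\omega_i(\xi)=\tilde Q(\xi,\mathcal{N}_i^+(\xi))+\tilde Q(\xi,\mathcal{N}_i^-(\xi))$ (assumed to sum to one over $i$); $\mathcal{A}(\xi)=\{i:\tilde\omega_i(\xi)>0\}$. For $x=(\xi,\vec\theta)\in\mathcal{X}_i$, $x'=(\xi',\vec\theta')$: $r_i(x,x')=\frac{\tilde\omega_i(\xi')\tilde\pi(\xi')Q_i((\xi',R_i\vec\theta'),(\xi,R_i\vec\theta))}{\tilde\omega_i(\xi)\tilde\pi(\xi)Q_i((\xi,\vec\theta),(\xi',\vec\theta'))}$, $P_i(x,x')=Q_i(x,x')\min(1,r_i(x,x'))+\mathbb{1}_{\{S_i(x)\}}(x')[1-\sum_{\tilde x}Q_i(x,\tilde x)\min(1,r_i(x,\tilde x))]$, and $\mathcal{K}((\xi,\vec\theta),\cdot)=\sum_i\tilde\omega_i(\xi)P_i((\xi,\vec\theta),\cdot)$.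 Assumption 4.4: for every $(\xi,\vec\theta)\in\mathcal{X}$ and $i\in\mathcal{A}(\xi)$ there exist $m\in\mathbb{N}$, $\xi'\in\Xi$ with $P_i^m((\xi,\vec\theta),(\xi',R_i(\vec\theta)))>0$. *)

theory Defs
  imports "HOL-Analysis.Analysis"
begin

primrec kpow :: "'b set \<Rightarrow> ('b \<Rightarrow> 'b \<Rightarrow> real) \<Rightarrow> nat \<Rightarrow> 'b \<Rightarrow> 'b \<Rightarrow> real" where
  "kpow S K 0 x y = (if x = y then 1 else 0)"
| "kpow S K (Suc m) x y = (\<Sum>\<^sub>\<infinity>z\<in>S. K x z * kpow S K m z y)"

definition kset :: "('a \<Rightarrow> 'a \<Rightarrow> real) \<Rightarrow> 'a \<Rightarrow> 'a set \<Rightarrow> real" where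
  "kset Q \<xi> A = (\<Sum>\<^sub>\<infinity>\<xi>'\<in>A. Q \<xi> \<xi>')"

definition Nplus :: "(nat \<Rightarrow> ('a \<times> 'a) set) \<Rightarrow> nat \<Rightarrow> 'a \<Rightarrow> 'a set" where
  "Nplus Ep i \<xi> = {\<xi>'. (\<xi>, \<xi>') \<in> Ep i}"

definition Nminus :: "(nat \<Rightarrow> ('a \<times> 'a) set) \<Rightarrow> nat \<Rightarrow> 'a \<Rightarrow> 'a set" where
  "Nminus Ep i \<xi> = {\<xi>'. (\<xi>', \<xi>) \<in> Ep i}"

definition Nsgn :: "(nat \<Rightarrow> ('a \<times> 'a) set) \<Rightarrow> nat \<Rightarrow> int \<Rightarrow> 'a \<Rightarrow> 'a set" where
  "Nsgn Ep i s \<xi> = (if s = 1 then Nplus Ep i \<xi> else Nminus Ep i \<xi>)"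

text \<open>Direction vectors theta in {-1,1}^n are lists of length n (0-indexed); R_i flips entry i.\<close>
definition flip :: "nat \<Rightarrow> int list \<Rightarrow> int list" where
  "flip i \<theta> = \<theta>[i := - (\<theta> ! i)]"

definition Sflip :: "nat \<Rightarrow> 'a \<times> int list \<Rightarrow> 'a \<times> int list" where
  "Sflip i x = (fst x, flip i (snd x))"

definition Xspace :: "nat \<Rightarrow> ('a \<times> int list) set" where
  "Xspace n = {(\<xi>, \<theta>). length \<theta> = n \<and> set \<theta> \<subseteq> {-1, 1}}"

definition omega :: "('a \<Rightarrow> 'a \<Rightarrow> real) \<Rightarrow> (nat \<Rightarrow> ('a \<times> 'a) set) \<Rightarrow> nat \<Rightarrow> 'a \<Rightarrow> real" where
  "omega Q Ep i \<xi> = kset Q \<xi> (Nplus Ep i \<xi>) + kset Q \<xi> (Nminus Ep i \<xi>)"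

definition Qi :: "('a \<Rightarrow> 'a \<Rightarrow> real) \<Rightarrow> (nat \<Rightarrow> ('a \<times> 'a) set) \<Rightarrow> nat
    \<Rightarrow> 'a \<times> int list \<Rightarrow> 'a \<times> int list \<Rightarrow> real" where
  "Qi Q Ep i x x' =
     (let \<xi> = fst x; \<theta> = snd x; \<xi>' = fst x'; \<theta>' = snd x'; N = Nsgn Ep i (\<theta> ! i) \<xi> in
      if N \<noteq> {} then (if \<xi>' \<in> N \<and> \<theta>' = \<theta> then Q \<xi> \<xi>' / kset Q \<xi> N else 0)
      else (if \<xi>' = \<xi> \<and> \<theta>' = flip i \<theta> then 1 else 0))"

definition ri :: "('a \<Rightarrow> real) \<Rightarrow> ('a \<Rightarrow> 'a \<Rightarrow> real) \<Rightarrow> (nat \<Rightarrow> ('a \<times> 'a) set) \<Rightarrow> nat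
    \<Rightarrow> 'a \<times> int list \<Rightarrow> 'a \<times> int list \<Rightarrow> real" where
  "ri \<pi> Q Ep i x x' =
     (omega Q Ep i (fst x') * \<pi> (fst x') * Qi Q Ep i (Sflip i x') (Sflip i x))
     / (omega Q Ep i (fst x) * \<pi> (fst x) * Qi Q Ep i x x')"

definition Pi :: "('a \<Rightarrow> real) \<Rightarrow> ('a \<Rightarrow> 'a \<Rightarrow> real) \<Rightarrow> (nat \<Rightarrow> ('a \<times> 'a) set) \<Rightarrow> nat \<Rightarrow> nat
    \<Rightarrow> 'a \<times> int list \<Rightarrow> 'a \<times> int list \<Rightarrow> real" where
  "Pi \<pi> Q Ep n i x x' =
     Qi Q Ep i x x' * min 1 (ri \<pi> Q Ep i x x')
     + (if x' = Sflip i x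
        then 1 - (\<Sum>\<^sub>\<infinity>y\<in>Xspace n. Qi Q Ep i x y * min 1 (ri \<pi> Q Ep i x y))
        else 0)"

definition Kker :: "('a \<Rightarrow> real) \<Rightarrow> ('a \<Rightarrow> 'a \<Rightarrow> real) \<Rightarrow> (nat \<Rightarrow> ('a \<times> 'a) set) \<Rightarrow> nat
    \<Rightarrow> 'a \<times> int list \<Rightarrow> 'a \<times> int list \<Rightarrow> real" where
  "Kker \<pi> Q Ep n x x' = (\<Sum>i<n. omega Q Ep i (fst x) * Pi \<pi> Q Ep n i x x')"

end

theory Submission
  imports Defs
begin

lemma flip_len[simp]: "length (flip i t) = length t"
  by (simp add: flip_def)

lemma flip_flip[simp]: "i < length t \<Longrightarrow> flip i (flip i t) = t"
  by (simp add: flip_def)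

lemma flip_X: "(a, t) \<in> Xspace n \<Longrightarrow> i < n \<Longrightarrow> (a, flip i t) \<in> Xspace n"
proof -
  assume A: "(a, t) \<in> Xspace n" "i < n"
  then have "t ! i \<in> set t" "set t \<subseteq> {-1,1}" by (auto simp: Xspace_def)
  then have "t ! i \<in> {-1,1}" by blast
  then have "- (t ! i) \<in> {-1, 1}" by auto
  then show ?thesis using A set_update_subset_insert[of t i "- (t ! i)"]
    by (auto simp: Xspace_def flip_def)
qed

lemma flip_neq: "(a, t) \<in> Xspace n \<Longrightarrow> i < n \<Longrightarrow> flip i t \<noteq> t"
proof
  assume A: "(a, t) \<in> Xspace n" "i < n" "flip i t = t"
  then have "t ! i \<in> set t" "set t \<subseteq> {-1,1}" by (auto simp: Xspace_def)
  then have "t ! i \<in> {-1,1}" by blast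
  moreover have "flip i t ! i = - (t ! i)" using A unfolding flip_def Xspace_def
    by (metis (mono_tags, lifting) case_prod_conv mem_Collect_eq nth_list_update_eq)
  ultimately show False using A by auto
qed

lemma Sflip_X: "x \<in> Xspace n \<Longrightarrow> i < n \<Longrightarrow> Sflip i x \<in> Xspace n"
  by (cases x) (simp add: Sflip_def flip_X)

lemma Sflip_Sflip: "x \<in> Xspace n \<Longrightarrow> i < n \<Longrightarrow> Sflip i (Sflip i x) = x"
  by (cases x) (simp add: Sflip_def Xspace_def)

lemma fst_Sflip[simp]: "fst (Sflip i x) = fst x"
  by (simp add: Sflip_def)

lemma has_sum_finsum:
  fixes F :: "'i \<Rightarrow> 'b \<Rightarrow> real"
  assumes "finite J" "\<And>j. j \<in> J \<Longrightarrow> (F j has_sum s j) A"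
  shows "((\<lambda>z. \<Sum>j\<in>J. F j z) has_sum (\<Sum>j\<in>J. s j)) A"
  using assms
proof (induction J rule: finite_induct)
  case empty
  then show ?case by (simp add: has_sum_0)
next
  case (insert j J)
  then show ?case by (simp add: has_sum_add)
qed

lemma has_sum_point:
  assumes "p \<in> A"
  shows "((\<lambda>y. if y = p then c else (0::real)) has_sum c) A"
proof -
  have "((\<lambda>y. if y = p then c else (0::real)) has_sum c) {p}"
    using has_sum_finite[of "{p}" "\<lambda>y. if y = p then c else (0::real)"] by simp
  then show ?thesis using assms
    by (subst has_sum_cong_neutral[where T="{p}"]) auto
qed

lemma kpow_nonzero_path:
  assumes "kpow S K m x y \<noteq> 0"
  shows "(\<lambda>a b. b \<in> S \<and> K a b \<noteq> 0)\<^sup>*\<^sup>* x y"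
  using assms
proof (induction m arbitrary: x)
  case 0
  then show ?case by (simp split: if_splits)
next
  case (Suc m)
  have "\<exists>z\<in>S. K x z * kpow S K m z y \<noteq> 0"
  proof (rule ccontr)
    assume "\<not> ?thesis"
    then have "(\<Sum>\<^sub>\<infinity>z\<in>S. K x z * kpow S K m z y) = 0"
      by (simp add: infsum_0)
    then show False using Suc.prems by simp
  qed
  then obtain z where z: "z \<in> S" "K x z \<noteq> 0" "kpow S K m z y \<noteq> 0" by auto
  show ?case
    by (rule converse_rtranclp_into_rtranclp[of _ x z]) (use z Suc.IH in auto)
qed

lemma kpow_bound:
  assumes nn: "\<And>a b. a \<in> S \<Longrightarrow> b \<in> S \<Longrightarrow> K a b \<ge> (0::real)"
    and sm: "\<And>a. a \<in> S \<Longrightarrow> K a summable_on S"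
    and bd: "\<And>a. a \<in> S \<Longrightarrow> infsum (K a) S \<le> B"
    and x: "x \<in> S"
  shows "0 \<le> kpow S K m x y \<and> kpow S K m x y \<le> B ^ m"
  using x
proof (induction m arbitrary: x)
  case 0
  then show ?case by simp
next
  case (Suc m)
  have B0: "0 \<le> B" using bd[OF Suc.prems] infsum_nonneg[of S "K x"] nn[OF Suc.prems] by force
  let ?f = "\<lambda>z. K x z * kpow S K m z y"
  have f0: "\<And>z. z \<in> S \<Longrightarrow> 0 \<le> ?f z" using Suc.IH nn Suc.prems by simp
  have fle: "\<And>z. z \<in> S \<Longrightarrow> ?f z \<le> K x z * B ^ m"
    using Suc.IH nn Suc.prems by (simp add: mult_left_mono)
  have s2: "(\<lambda>z. K x z * B ^ m) summable_on S"
    using sm[OF Suc.prems] by (rule summable_on_cmult_left)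
  have sf: "?f summable_on S"
    by (rule summable_on_comparison_test[OF s2 fle f0])
  have "infsum ?f S \<le> infsum (\<lambda>z. K x z * B ^ m) S"
    by (rule infsum_mono[OF sf s2 fle])
  also have "\<dots> = infsum (K x) S * B ^ m" by (simp add: infsum_cmult_left')
  also have "\<dots> \<le> B * B ^ m"
    using bd[OF Suc.prems] B0 by (simp add: mult_right_mono)
  finally show ?case using infsum_nonneg[of S ?f] f0 by simp
qed

lemma kpow_path_pos:
  assumes nn: "\<And>a b. a \<in> S \<Longrightarrow> b \<in> S \<Longrightarrow> K a b \<ge> (0::real)"
    and sm: "\<And>a. a \<in> S \<Longrightarrow> K a summable_on S"
    and bd: "\<And>a. a \<in> S \<Longrightarrow> infsum (K a) S \<le> B"
    and path: "(\<lambda>a b. a \<in> S \<and> b \<in> S \<and> K a b > 0)\<^sup>*\<^sup>* x y"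
    and y: "y \<in> S"
  shows "\<exists>m. kpow S K m x y > 0"
  using path
proof (induction rule: converse_rtranclp_induct)
  case base
  have "kpow S K 0 y y > 0" by simp
  then show ?case by blast
next
  case (step x z)
  then obtain m where m: "kpow S K m z y > 0" by blast
  have xS: "x \<in> S" and zS: "z \<in> S" and Kxz: "K x z > 0" using step by auto
  let ?f = "\<lambda>w. K x w * kpow S K m w y"
  have f0: "\<And>w. w \<in> S \<Longrightarrow> 0 \<le> ?f w" using kpow_bound[OF nn sm bd] nn xS by simp
  have fle: "\<And>w. w \<in> S \<Longrightarrow> ?f w \<le> K x w * B ^ m"
    using kpow_bound[OF nn sm bd] nn xS by (simp add: mult_left_mono)
  have s2: "(\<lambda>w. K x w * B ^ m) summable_on S"
    using sm[OF xS] by (rule summable_on_cmult_left)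
  have sf: "?f summable_on S"
    by (rule summable_on_comparison_test[OF s2 fle f0])
  have "infsum ?f {z} \<le> infsum ?f S"
    by (rule infsum_mono_neutral) (use sf zS f0 in auto)
  moreover have "infsum ?f {z} > 0" using Kxz m by simp
  ultimately have "kpow S K (Suc m) x y > 0" by simp
  then show ?case by blast
qed


locale kset_setup =
  fixes \<pi> :: "'a \<Rightarrow> real" and Q :: "'a \<Rightarrow> 'a \<Rightarrow> real"
    and Ep :: "nat \<Rightarrow> ('a \<times> 'a) set" and n :: nat
  assumes Q_nonneg: "\<forall>a b. Q a b \<ge> 0"
    and Q_markov: "\<forall>a. (Q a has_sum 1) UNIV"
    and pi_pos: "\<forall>a. \<pi> a > 0"
    and omega_sum: "\<forall>a. (\<Sum>i<n. omega Q Ep i a) = 1"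
begin

lemma kset_nonneg: "kset Q a A \<ge> 0"
  unfolding kset_def using Q_nonneg by (simp add: infsum_nonneg)

lemma omega_nonneg: "omega Q Ep j a \<ge> 0"
  unfolding omega_def using kset_nonneg by (simp add: add_nonneg_nonneg)

lemma Qi_nonneg: "Qi Q Ep j x y \<ge> 0"
  unfolding Qi_def Let_def using kset_nonneg Q_nonneg by simp

lemma Qi_cases: "Qi Q Ep j x y \<noteq> 0 \<Longrightarrow> y = Sflip j x \<or> snd y = snd x"
  unfolding Qi_def Let_def Sflip_def by (cases y) (auto split: if_splits)

lemma ri_nonneg: "ri \<pi> Q Ep j x y \<ge> 0"
  unfolding ri_def using omega_nonneg Qi_nonneg pi_pos
  by (intro divide_nonneg_nonneg mult_nonneg_nonneg) (auto intro: less_imp_le)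

lemma Qi_has_sum:
  assumes x: "x \<in> Xspace n" and j: "j < n"
  shows "\<exists>a. (Qi Q Ep j x has_sum a) (Xspace n) \<and> a \<le> 1"
proof -
  obtain \<xi> \<theta> where xe: "x = (\<xi>, \<theta>)" by (cases x)
  define N where "N = Nsgn Ep j (\<theta> ! j) \<xi>"
  show ?thesis
  proof (cases "N = {}")
    case True
    then have "Qi Q Ep j x = (\<lambda>y. if y = (\<xi>, flip j \<theta>) then 1 else 0)"
      unfolding Qi_def xe N_def Let_def by (auto simp: fun_eq_iff)
    moreover have "(\<xi>, flip j \<theta>) \<in> Xspace n" using flip_X x j xe by simp
    ultimately show ?thesis using has_sum_point by fastforce
  next
    case False
    define c where "c = kset Q \<xi> N"
    have f: "Qi Q Ep j x = (\<lambda>y. if fst y \<in> N \<and> snd y = \<theta> then Q \<xi> (fst y) / c else 0)"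
      using False unfolding Qi_def xe N_def c_def Let_def by (auto simp: fun_eq_iff)
    have "Q \<xi> summable_on N"
      using Q_markov summable_on_subset_banach[of "Q \<xi>" UNIV N] summable_on_def by blast
    then have "(Q \<xi> has_sum c) N" unfolding c_def kset_def by simp
    then have h1: "((\<lambda>z. Q \<xi> z * (1 / c)) has_sum (c * (1 / c))) N"
      by (rule has_sum_cmult_left)
    define e where "e = (\<lambda>z::'a. (z, \<theta>))"
    have inj: "inj_on e N" unfolding e_def by (simp add: inj_on_def)
    have h2: "(Qi Q Ep j x has_sum (c * (1 / c))) (e ` N)"
      unfolding has_sum_reindex[OF inj] using h1
      by (subst has_sum_cong[where g="\<lambda>z. Q \<xi> z * (1 / c)"]) (auto simp: f e_def)
    have sub: "e ` N \<subseteq> Xspace n" using x xe unfolding e_def Xspace_def by auto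
    have h3: "(Qi Q Ep j x has_sum (c * (1 / c))) (Xspace n)"
      using h2 by (subst has_sum_cong_neutral[where T="e ` N"]) (use sub in \<open>auto simp: f e_def\<close>)
    moreover have "c * (1 / c) \<le> 1" by (cases "c = 0") auto
    ultimately show ?thesis by blast
  qed
qed


lemma Qi_sum:
  assumes x: "x \<in> Xspace n" and j: "j < n"
  shows "(Qi Q Ep j x has_sum infsum (Qi Q Ep j x) (Xspace n)) (Xspace n)"
    "infsum (Qi Q Ep j x) (Xspace n) \<le> 1"
proof -
  obtain a where a: "(Qi Q Ep j x has_sum a) (Xspace n)" "a \<le> 1" using Qi_has_sum[OF x j] by blast
  then show "(Qi Q Ep j x has_sum infsum (Qi Q Ep j x) (Xspace n)) (Xspace n)"
    using has_sum_infsum summable_on_def by blast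
  show "infsum (Qi Q Ep j x) (Xspace n) \<le> 1" using a infsumI by metis
qed

lemma Pi_nonneg:
  assumes x: "x \<in> Xspace n" and j: "j < n"
  shows "Pi \<pi> Q Ep n j x z \<ge> 0"
proof -
  let ?f = "\<lambda>y. Qi Q Ep j x y * min 1 (ri \<pi> Q Ep j x y)"
  have f0: "\<And>y. 0 \<le> ?f y" using Qi_nonneg ri_nonneg by simp
  have fle: "\<And>y. ?f y \<le> Qi Q Ep j x y" using Qi_nonneg by (simp add: mult_left_le)
  have sQ: "Qi Q Ep j x summable_on Xspace n" using Qi_sum[OF x j] summable_on_def by blast
  have sf: "?f summable_on Xspace n" by (rule summable_on_comparison_test[OF sQ fle f0])
  have "infsum ?f (Xspace n) \<le> infsum (Qi Q Ep j x) (Xspace n)" by (rule infsum_mono[OF sf sQ fle])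
  then have "infsum ?f (Xspace n) \<le> 1" using Qi_sum[OF x j] by linarith
  then show ?thesis unfolding Pi_def using f0 by simp
qed

lemma Pi_le:
  "Pi \<pi> Q Ep n j x z \<le> Qi Q Ep j x z + (if z = Sflip j x then 1 else 0)"
proof -
  let ?f = "\<lambda>y. Qi Q Ep j x y * min 1 (ri \<pi> Q Ep j x y)"
  have f0: "\<And>y. 0 \<le> ?f y" using Qi_nonneg ri_nonneg by simp
  have fle: "\<And>y. ?f y \<le> Qi Q Ep j x y" using Qi_nonneg by (simp add: mult_left_le)
  have "infsum ?f (Xspace n) \<ge> 0" using f0 by (simp add: infsum_nonneg)
  then show ?thesis unfolding Pi_def using fle[of z] by auto
qed

lemma K_nonneg:
  assumes x: "x \<in> Xspace n"
  shows "Kker \<pi> Q Ep n x z \<ge> 0"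
  unfolding Kker_def using Pi_nonneg[OF x] omega_nonneg by (intro sum_nonneg mult_nonneg_nonneg) auto

lemma K_sum:
  assumes x: "x \<in> Xspace n"
  shows "Kker \<pi> Q Ep n x summable_on Xspace n" "infsum (Kker \<pi> Q Ep n x) (Xspace n) \<le> 2"
proof -
  define a where "a j = infsum (Qi Q Ep j x) (Xspace n)" for j
  define G where "G j z = omega Q Ep j (fst x) * (Qi Q Ep j x z + (if z = Sflip j x then 1 else 0))" for j z
  have hG: "(G j has_sum (omega Q Ep j (fst x) * (a j + 1))) (Xspace n)" if j: "j \<in> {..<n}" for j
  proof -
    have "((\<lambda>z. Qi Q Ep j x z + (if z = Sflip j x then 1 else 0)) has_sum (a j + 1)) (Xspace n)"
      using j Qi_sum(1)[OF x, of j] has_sum_point[OF Sflip_X[OF x, of j], of 1]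
      unfolding a_def by (intro has_sum_add) auto
    then show ?thesis unfolding G_def by (rule has_sum_cmult_right)
  qed
  have hS: "((\<lambda>z. \<Sum>j<n. G j z) has_sum (\<Sum>j<n. omega Q Ep j (fst x) * (a j + 1))) (Xspace n)"
    by (rule has_sum_finsum) (use hG in auto)
  have le: "\<And>z. Kker \<pi> Q Ep n x z \<le> (\<Sum>j<n. G j z)"
    unfolding Kker_def G_def using Pi_le omega_nonneg by (intro sum_mono mult_left_mono) auto
  have sG: "(\<lambda>z. \<Sum>j<n. G j z) summable_on Xspace n" using hS summable_on_def by blast
  show sK: "Kker \<pi> Q Ep n x summable_on Xspace n"
    by (rule summable_on_comparison_test[OF sG le K_nonneg[OF x]])
  have "infsum (Kker \<pi> Q Ep n x) (Xspace n) \<le> infsum (\<lambda>z. \<Sum>j<n. G j z) (Xspace n)"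
    by (rule infsum_mono[OF sK sG le])
  also have "\<dots> = (\<Sum>j<n. omega Q Ep j (fst x) * (a j + 1))" using hS infsumI by blast
  also have "\<dots> \<le> (\<Sum>j<n. omega Q Ep j (fst x) * 2)"
    using Qi_sum(2)[OF x] omega_nonneg unfolding a_def by (intro sum_mono mult_left_mono) auto
  also have "\<dots> = 2" using omega_sum by (simp add: sum_distrib_right[symmetric])
  finally show "infsum (Kker \<pi> Q Ep n x) (Xspace n) \<le> 2" .
qed


lemma Pi_ge_first:
  assumes x: "x \<in> Xspace n" and j: "j < n"
  shows "Pi \<pi> Q Ep n j x z \<ge> Qi Q Ep j x z * min 1 (ri \<pi> Q Ep j x z)"
proof -
  let ?f = "\<lambda>y. Qi Q Ep j x y * min 1 (ri \<pi> Q Ep j x y)"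
  have f0: "\<And>y. 0 \<le> ?f y" using Qi_nonneg ri_nonneg by simp
  have fle: "\<And>y. ?f y \<le> Qi Q Ep j x y" using Qi_nonneg by (simp add: mult_left_le)
  have sQ: "Qi Q Ep j x summable_on Xspace n" using Qi_sum[OF x j] summable_on_def by blast
  have sf: "?f summable_on Xspace n" by (rule summable_on_comparison_test[OF sQ fle f0])
  have "infsum ?f (Xspace n) \<le> infsum (Qi Q Ep j x) (Xspace n)" by (rule infsum_mono[OF sf sQ fle])
  then have "infsum ?f (Xspace n) \<le> 1" using Qi_sum[OF x j] by linarith
  then show ?thesis unfolding Pi_def by simp
qed

lemma step_first:
  assumes "Pi \<pi> Q Ep n j x y > 0" "y \<noteq> Sflip j x"
  shows "Qi Q Ep j x y > 0" "ri \<pi> Q Ep j x y > 0"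
proof -
  have P: "Pi \<pi> Q Ep n j x y = Qi Q Ep j x y * min 1 (ri \<pi> Q Ep j x y)"
    using assms(2) unfolding Pi_def by simp
  have q: "Qi Q Ep j x y \<ge> 0" by (rule Qi_nonneg)
  have "0 < Qi Q Ep j x y * min 1 (ri \<pi> Q Ep j x y)" using assms(1) P by simp
  then have "Qi Q Ep j x y > 0 \<and> min 1 (ri \<pi> Q Ep j x y) > 0"
    using q by (simp add: zero_less_mult_iff)
  then show "Qi Q Ep j x y > 0" "ri \<pi> Q Ep j x y > 0" by auto
qed

lemma step_omega:
  assumes "omega Q Ep j (fst x) > 0" "Pi \<pi> Q Ep n j x y > 0"
  shows "omega Q Ep j (fst y) > 0"
proof (cases "y = Sflip j x")
  case True
  then show ?thesis using assms by simp
next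
  case False
  have r: "ri \<pi> Q Ep j x y > 0" using step_first[OF assms(2) False] by simp
  show ?thesis
  proof (rule ccontr)
    assume "\<not> ?thesis"
    then have "omega Q Ep j (fst y) = 0" using omega_nonneg[of j "fst y"] by simp
    then have "ri \<pi> Q Ep j x y = 0" unfolding ri_def by simp
    then show False using r by simp
  qed
qed

lemma step_K:
  assumes "j < n" "omega Q Ep j (fst x) > 0" "Pi \<pi> Q Ep n j x y > 0" "x \<in> Xspace n"
  shows "Kker \<pi> Q Ep n x y > 0"
proof -
  have "omega Q Ep j (fst x) * Pi \<pi> Q Ep n j x y \<le> Kker \<pi> Q Ep n x y"
    unfolding Kker_def
    by (rule member_le_sum[where f="\<lambda>i. omega Q Ep i (fst x) * Pi \<pi> Q Ep n i x y"])
       (use assms Pi_nonneg omega_nonneg in auto)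
  moreover have "omega Q Ep j (fst x) * Pi \<pi> Q Ep n j x y > 0" using assms by simp
  ultimately show ?thesis by linarith
qed

lemma step_snd:
  assumes "Pi \<pi> Q Ep n j x y > 0" "snd y \<noteq> snd x"
  shows "y = Sflip j x"
proof (rule ccontr)
  assume ne: "y \<noteq> Sflip j x"
  then have "Qi Q Ep j x y > 0" using step_first assms by blast
  then have "Qi Q Ep j x y \<noteq> 0" by simp
  then show False using Qi_cases[of j x y] ne assms(2) by blast
qed

lemma step_rev:
  assumes j: "j < n" and x: "x \<in> Xspace n" and y: "y \<in> Xspace n"
    and om: "omega Q Ep j (fst x) > 0" and P: "Pi \<pi> Q Ep n j x y > 0"
  shows "Pi \<pi> Q Ep n j (Sflip j y) (Sflip j x) > 0"
proof (cases "y = Sflip j x")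
  case True
  then show ?thesis using Sflip_Sflip[OF x j] P by simp
next
  case False
  have q: "Qi Q Ep j x y > 0" and r: "ri \<pi> Q Ep j x y > 0" using step_first[OF P False] by auto
  define num where "num = omega Q Ep j (fst y) * \<pi> (fst y) * Qi Q Ep j (Sflip j y) (Sflip j x)"
  define den where "den = omega Q Ep j (fst x) * \<pi> (fst x) * Qi Q Ep j x y"
  have den: "den > 0" unfolding den_def using om q pi_pos by simp
  have rr: "ri \<pi> Q Ep j x y = num / den" unfolding ri_def num_def den_def by simp
  have num: "num > 0" using r den rr by (simp add: zero_less_divide_iff)
  have q2: "Qi Q Ep j (Sflip j y) (Sflip j x) > 0"
  proof -
    have "Qi Q Ep j (Sflip j y) (Sflip j x) \<noteq> 0" using num unfolding num_def by auto
    then show ?thesis using Qi_nonneg[of j "Sflip j y" "Sflip j x"] by simp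
  qed
  have "ri \<pi> Q Ep j (Sflip j y) (Sflip j x) = den / num"
    unfolding ri_def num_def den_def using Sflip_Sflip[OF x j] Sflip_Sflip[OF y j] by simp
  then have r2: "ri \<pi> Q Ep j (Sflip j y) (Sflip j x) > 0" using num den by simp
  have "Qi Q Ep j (Sflip j y) (Sflip j x) * min 1 (ri \<pi> Q Ep j (Sflip j y) (Sflip j x)) > 0"
    using q2 r2 by simp
  then show ?thesis using Pi_ge_first[OF Sflip_X[OF y j] j] by (meson less_le_trans)
qed


definition stepP :: "nat \<Rightarrow> 'a \<times> int list \<Rightarrow> 'a \<times> int list \<Rightarrow> bool" where
  "stepP j x y \<longleftrightarrow> x \<in> Xspace n \<and> y \<in> Xspace n \<and> omega Q Ep j (fst x) > 0 \<and> Pi \<pi> Q Ep n j x y > 0"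

lemma path_from_kpow:
  assumes j: "j < n" and x: "x \<in> Xspace n" and om: "omega Q Ep j (fst x) > 0"
    and k: "kpow (Xspace n) (Pi \<pi> Q Ep n j) m x y \<noteq> 0"
  shows "(stepP j)\<^sup>*\<^sup>* x y"
proof -
  have R: "(\<lambda>a b. b \<in> Xspace n \<and> Pi \<pi> Q Ep n j a b \<noteq> 0)\<^sup>*\<^sup>* x y"
    by (rule kpow_nonzero_path[OF k])
  have "x \<in> Xspace n \<longrightarrow> omega Q Ep j (fst x) > 0 \<longrightarrow> (stepP j)\<^sup>*\<^sup>* x y"
    using R
  proof (induction rule: converse_rtranclp_induct)
    case base
    then show ?case by simp
  next
    case (step a b)
    show ?case
    proof (intro impI)
      assume a: "a \<in> Xspace n" "omega Q Ep j (fst a) > 0"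
      have P: "Pi \<pi> Q Ep n j a b > 0" using step(1) Pi_nonneg[OF a(1) j, of b] by simp
      have ob: "omega Q Ep j (fst b) > 0" by (rule step_omega[OF a(2) P])
      have "stepP j a b" unfolding stepP_def using a P step(1) by simp
      then show "(stepP j)\<^sup>*\<^sup>* a y"
        using step(3) step(1) ob by (meson converse_rtranclp_into_rtranclp)
    qed
  qed
  then show ?thesis using x om by simp
qed

lemma path_rev:
  assumes j: "j < n" and p: "(stepP j)\<^sup>*\<^sup>* x y"
  shows "(stepP j)\<^sup>*\<^sup>* (Sflip j y) (Sflip j x)"
  using p
proof (induction rule: rtranclp_induct)
  case base
  then show ?case by simp
next
  case (step y z)
  have s: "y \<in> Xspace n" "z \<in> Xspace n" "omega Q Ep j (fst y) > 0" "Pi \<pi> Q Ep n j y z > 0"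
    using step(2) unfolding stepP_def by auto
  have "stepP j (Sflip j z) (Sflip j y)"
    unfolding stepP_def using Sflip_X[OF s(1) j] Sflip_X[OF s(2) j] step_omega[OF s(3) s(4)]
      step_rev[OF j s] by simp
  then show ?case using step(3) by (meson converse_rtranclp_into_rtranclp)
qed

lemma first_flip:
  assumes p: "(stepP j)\<^sup>*\<^sup>* x y" and sx: "snd x = \<theta>" and sy: "snd y \<noteq> \<theta>"
  shows "\<exists>\<eta>. (stepP j)\<^sup>*\<^sup>* x (\<eta>, \<theta>) \<and> stepP j (\<eta>, \<theta>) (\<eta>, flip j \<theta>)"
  using p sy
proof (induction rule: rtranclp_induct)
  case base
  then show ?case using sx by simp
next
  case (step y z)
  show ?case
  proof (cases "snd y = \<theta>")
    case False
    then show ?thesis using step.IH by blast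
  next
    case True
    have P: "Pi \<pi> Q Ep n j y z > 0" using step(2) unfolding stepP_def by auto
    have "z = Sflip j y" using step_snd[OF P] step.prems True by simp
    then have "z = (fst y, flip j \<theta>)" using True by (simp add: Sflip_def)
    moreover have "y = (fst y, \<theta>)" using True by (cases y) simp
    ultimately show ?thesis using step(1) step(2) by metis
  qed
qed

lemma stepP_K:
  assumes j: "j < n" and "stepP j x y"
  shows "x \<in> Xspace n \<and> y \<in> Xspace n \<and> Kker \<pi> Q Ep n x y > 0"
  using assms step_K[OF j] unfolding stepP_def by blast

end

theorem lemmaB2:
  fixes \<pi> :: "'a::countable \<Rightarrow> real"
    and Q :: "'a \<Rightarrow> 'a \<Rightarrow> real"
    and n :: nat
    and V :: "nat \<Rightarrow> 'a set"
    and Ep :: "nat \<Rightarrow> ('a \<times> 'a) set"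
  assumes pi_prob: "(\<pi> has_sum 1) UNIV"
    and pi_pos: "\<forall>\<xi>. \<pi> \<xi> > 0"
    and Q_nonneg: "\<forall>\<xi> \<xi>'. Q \<xi> \<xi>' \<ge> 0"
    and Q_markov: "\<forall>\<xi>. (Q \<xi> has_sum 1) UNIV"
    and Q_sym: "\<forall>\<xi> \<xi>'. Q \<xi> \<xi>' \<noteq> 0 \<longleftrightarrow> Q \<xi>' \<xi> \<noteq> 0"
    and Q_irred: "\<forall>\<xi> \<xi>'. \<exists>m. kpow UNIV Q m \<xi> \<xi>' > 0"
    and sub_edges: "\<forall>i<n. Ep i \<subseteq> {(\<xi>, \<xi>'). Q \<xi> \<xi>' > 0}"
    and sub_verts: "\<forall>i<n. Ep i \<subseteq> V i \<times> V i"
    and no_isolated: "\<forall>i<n. \<forall>v\<in>V i. \<exists>u. (v, u) \<in> Ep i \<or> (u, v) \<in> Ep i"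
    and cover_V: "(\<Union>i<n. V i) = UNIV"
    and cover_E: "(\<Union>i<n. Ep i \<union> (Ep i)\<inverse>) = {(\<xi>, \<xi>'). Q \<xi> \<xi>' > 0}"
    and omega_sum: "\<forall>\<xi>. (\<Sum>i<n. omega Q Ep i \<xi>) = 1"
    and A44: "\<forall>\<xi> \<theta> i. (\<xi>, \<theta>) \<in> Xspace n \<longrightarrow> i < n \<longrightarrow> omega Q Ep i \<xi> > 0 \<longrightarrow>
                (\<exists>m \<xi>'. kpow (Xspace n) (Pi \<pi> Q Ep n i) m (\<xi>, \<theta>) (\<xi>', flip i \<theta>) > 0)"
    and x_in: "(\<xi>, \<theta>) \<in> Xspace n"
    and i_lt: "i < n"
    and i_active: "omega Q Ep i \<xi> > 0"
  shows "\<exists>m. kpow (Xspace n) (Kker \<pi> Q Ep n) m (\<xi>, \<theta>) (\<xi>, flip i \<theta>) > 0"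
proof -
  interpret L: kset_setup \<pi> Q Ep n
    using Q_nonneg Q_markov pi_pos omega_sum by unfold_locales auto
  obtain m \<xi>' where k: "kpow (Xspace n) (Pi \<pi> Q Ep n i) m (\<xi>, \<theta>) (\<xi>', flip i \<theta>) > 0"
    using A44 x_in i_lt i_active by blast
  have p: "(L.stepP i)\<^sup>*\<^sup>* (\<xi>, \<theta>) (\<xi>', flip i \<theta>)"
    using L.path_from_kpow[OF i_lt x_in] i_active k by (metis fst_conv less_irrefl)
  have ne: "flip i \<theta> \<noteq> \<theta>" by (rule flip_neq[OF x_in i_lt])
  obtain \<eta> where e1: "(L.stepP i)\<^sup>*\<^sup>* (\<xi>, \<theta>) (\<eta>, \<theta>)"
    and e2: "L.stepP i (\<eta>, \<theta>) (\<eta>, flip i \<theta>)"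
    using L.first_flip[OF p _ ] ne by fastforce
  have e3: "(L.stepP i)\<^sup>*\<^sup>* (\<eta>, flip i \<theta>) (\<xi>, flip i \<theta>)"
    using L.path_rev[OF i_lt e1] by (simp add: Sflip_def)
  have pp: "(L.stepP i)\<^sup>*\<^sup>* (\<xi>, \<theta>) (\<xi>, flip i \<theta>)"
    using e1 e2 e3 by (meson rtranclp.rtrancl_into_rtrancl rtranclp_trans)
  have pk: "(\<lambda>a b. a \<in> Xspace n \<and> b \<in> Xspace n \<and> Kker \<pi> Q Ep n a b > 0)\<^sup>*\<^sup>* (\<xi>, \<theta>) (\<xi>, flip i \<theta>)"
    using pp by (rule rtranclp_mono[THEN predicate2D, rotated]) (use L.stepP_K[OF i_lt] in auto)
  show ?thesis
    by (rule kpow_path_pos[OF _ _ _ pk flip_X[OF x_in i_lt], where B=2])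
       (use L.K_nonneg L.K_sum in auto)
qed

end
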